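(* Let $D$ be a finite domain in $\mathbb{Z}^2$ and let $\mathcal{S}$ be a finite collection of paths in $D$ such that each path starts and ends on $\partial D$ and no two paths of $\mathcal{S}$ have an essential crossing. Then there is a path of total length at most $1.5\,|\partial D|+\sum_{P\in\mathcal{S}}|P|$ whose image is obtained from the union of the images of the paths in $\mathcal{S}$ by adding connecting segments along the perimeter of $D$.
   Context: Paths are paths in the standard Cayley graph of $\mathbb{Z}^2$ with generators $e_1,e_2$; $|P|$ is the length of $P$; $\partial D$ is the boundary of $D$, viewed as a closed curve. For a path $P_i$ write $A_i$ for its start and $B_i$ for its end. Two paths $P_1,P_2$ with endpoints on $\partial D$ have an essential crossing if $A_2$ and $B_2$ lie in the two different open arcs of $\partial D$ between $A_1$ and $B_1$. *)

theory Defs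
  imports "HOL-Analysis.Analysis"
begin

type_synonym pt = "int \<times> int"

definition adj :: "pt \<Rightarrow> pt \<Rightarrow> bool" where
  "adj u v \<longleftrightarrow> \<bar>fst u - fst v\<bar> + \<bar>snd u - snd v\<bar> = 1"

definition lpath :: "pt list \<Rightarrow> bool" where
  "lpath xs \<longleftrightarrow> xs \<noteq> [] \<and> (\<forall>i. Suc i < length xs \<longrightarrow> adj (xs ! i) (xs ! Suc i))"

definition plen :: "pt list \<Rightarrow> nat" where
  "plen xs = length xs - 1"

text \<open>Boundary of a domain: a simple closed lattice curve, given as a closed vertex list.\<close>
definition lcycle :: "pt list \<Rightarrow> bool" where
  "lcycle c \<longleftrightarrow> lpath c \<and> length c \<ge> 5 \<and> hd c = last c \<and> distinct (butlast c)"

definition toR :: "pt \<Rightarrow> real \<times> real" where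
  "toR p = (of_int (fst p), of_int (snd p))"

definition pimage :: "pt list \<Rightarrow> (real \<times> real) set" where
  "pimage xs = toR ` set xs \<union>
     \<Union>{closed_segment (toR (xs ! i)) (toR (xs ! Suc i)) | i. Suc i < length xs}"

definition region :: "pt list \<Rightarrow> (real \<times> real) set" where
  "region c = pimage c \<union> inside (pimage c)"

definition bidx :: "pt list \<Rightarrow> pt \<Rightarrow> nat" where
  "bidx c v = (THE i. i < length c - 1 \<and> c ! i = v)"

text \<open>k lies in the open cyclic arc from position i to position j.\<close>
definition cyc_between :: "nat \<Rightarrow> nat \<Rightarrow> nat \<Rightarrow> bool" where
  "cyc_between i j k \<longleftrightarrow> (i < j \<and> i < k \<and> k < j) \<or> (j < i \<and> (i < k \<or> k < j))"

text \<open>Essential crossing: A2 and B2 lie in the two different open arcs between A1 and B1.\<close>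
definition ess_cross :: "pt list \<Rightarrow> pt list \<Rightarrow> pt list \<Rightarrow> bool" where
  "ess_cross c P1 P2 \<longleftrightarrow>
     hd P2 \<notin> {hd P1, last P1} \<and> last P2 \<notin> {hd P1, last P1} \<and>
     (cyc_between (bidx c (hd P1)) (bidx c (last P1)) (bidx c (hd P2)) \<noteq>
      cyc_between (bidx c (hd P1)) (bidx c (last P1)) (bidx c (last P2)))"

end

theory Submission
  imports Defs
begin

definition ed :: "pt list \<Rightarrow> (pt \<times> pt) list" where
  "ed xs = zip xs (tl xs)"

lemma set_ed: "set (ed xs) = {(xs ! i, xs ! Suc i) | i. Suc i < length xs}"
  unfolding ed_def set_zip by (auto simp: nth_tl)

lemma lpath_alt: "lpath xs \<longleftrightarrow> xs \<noteq> [] \<and> (\<forall>(u,v)\<in>set (ed xs). adj u v)"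
proof -
  have "(\<forall>(u,v)\<in>set (ed xs). adj u v) \<longleftrightarrow> (\<forall>i. Suc i < length xs \<longrightarrow> adj (xs ! i) (xs ! Suc i))"
    unfolding set_ed by blast
  then show ?thesis unfolding lpath_def by blast
qed

lemma pimage_alt: "pimage xs = toR ` set xs \<union> (\<Union>(u,v)\<in>set (ed xs). closed_segment (toR u) (toR v))"
  unfolding pimage_def set_ed by auto

lemma ed_app: "xs \<noteq> [] \<Longrightarrow> ys \<noteq> [] \<Longrightarrow> last xs = hd ys \<Longrightarrow> ed (xs @ tl ys) = ed xs @ ed ys"
proof (induction xs)
  case Nil then show ?case by simp
next
  case (Cons a xs)
  show ?case
  proof (cases xs)
    case Nil
    then show ?thesis using Cons by (cases ys) (auto simp: ed_def)
  next
    case (Cons b zs)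
    then show ?thesis using Cons.IH Cons.prems by (auto simp: ed_def)
  qed
qed

lemma ed_snoc: "ed (xs @ [a]) = ed xs @ (if xs = [] then [] else [(last xs, a)])"
proof (induction xs)
  case Nil then show ?case by (simp add: ed_def)
next
  case (Cons b xs)
  then show ?case by (cases xs) (auto simp: ed_def)
qed

lemma ed_Nil[simp]: "ed [] = []" by (simp add: ed_def)

lemma ed_Cons: "ed (a # xs) = (if xs = [] then [] else (a, hd xs) # ed xs)"
  by (cases xs) (auto simp: ed_def)

lemma ed_rev: "ed (rev xs) = map prod.swap (rev (ed xs))"
proof (induction xs)
  case Nil then show ?case by (simp add: ed_def)
next
  case (Cons a xs)
  then show ?case by (auto simp: ed_snoc ed_Cons last_rev)
qed

lemma set_app_tl: "xs \<noteq> [] \<Longrightarrow> ys \<noteq> [] \<Longrightarrow> last xs = hd ys \<Longrightarrow> set (xs @ tl ys) = set xs \<union> set ys"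
  by (cases ys) auto

lemma lpath_app: "lpath xs \<Longrightarrow> lpath ys \<Longrightarrow> last xs = hd ys \<Longrightarrow> lpath (xs @ tl ys)"
  unfolding lpath_alt by (auto simp: ed_app)

lemma pimage_app: "xs \<noteq> [] \<Longrightarrow> ys \<noteq> [] \<Longrightarrow> last xs = hd ys \<Longrightarrow> pimage (xs @ tl ys) = pimage xs \<union> pimage ys"
proof -
  assume a: "xs \<noteq> []" "ys \<noteq> []" "last xs = hd ys"
  have "set (xs @ tl ys) = set xs \<union> set ys" using set_app_tl[OF a] .
  then show ?thesis unfolding pimage_alt using ed_app[OF a] by (simp add: image_Un UN_Un Un_ac)
qed

lemma plen_app: "xs \<noteq> [] \<Longrightarrow> ys \<noteq> [] \<Longrightarrow> plen (xs @ tl ys) = plen xs + plen ys"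
  unfolding plen_def by (cases ys; cases xs) auto

lemma adj_sym: "adj u v = adj v u"
  unfolding adj_def by auto

lemma lpath_rev: "lpath (rev xs) = lpath xs"
  unfolding lpath_alt ed_rev by (auto simp: adj_sym)

lemma pimage_rev: "pimage (rev xs) = pimage xs"
  unfolding pimage_alt ed_rev by (auto simp: closed_segment_commute)

lemma plen_rev: "plen (rev xs) = plen xs"
  unfolding plen_def by simp

lemma lpath_take: "lpath R \<Longrightarrow> 0 < n \<Longrightarrow> lpath (take n R)"
  unfolding lpath_def by auto

lemma lpath_drop: "lpath R \<Longrightarrow> n < length R \<Longrightarrow> lpath (drop n R)"
  unfolding lpath_def by auto

lemma split_at: "i < length R \<Longrightarrow> take (Suc i) R @ tl (drop i R) = R"
  by (metis Cons_nth_drop_Suc append_take_drop_id list.sel(3) take_Suc_conv_app_nth)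


definition ec :: "pt list \<Rightarrow> pt \<Rightarrow> nat" where
  "ec P v = (if hd P = v then 1 else 0) + (if last P = v then 1 else 0)"

definition ecnt :: "pt list list \<Rightarrow> pt \<Rightarrow> nat" where
  "ecnt Ps v = sum_list (map (\<lambda>P. ec P v) Ps)"

lemma splice:
  assumes R: "lpath R" and i: "i < length R" "R ! i = a" and P: "lpath P" "hd P = a" "last P = a"
  shows "\<exists>R'. lpath R' \<and> set R \<subseteq> set R' \<and> plen R' = plen R + plen P \<and> pimage R' = pimage R \<union> pimage P"
proof -
  define X where "X = take (Suc i) R"
  define Y where "Y = drop i R"
  have X: "lpath X" "X \<noteq> []" "last X = a" using R i lpath_take[OF R, of "Suc i"]
    by (auto simp: X_def take_Suc_conv_app_nth)
  have Y: "lpath Y" "Y \<noteq> []" "hd Y = a" using R i by (auto simp: Y_def lpath_drop hd_drop_conv_nth lpath_def)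
  have RXY: "R = X @ tl Y" using split_at[OF i(1)] by (simp add: X_def Y_def)
  have Pne: "P \<noteq> []" using P by (simp add: lpath_def)
  define Z where "Z = P @ tl Y"
  have Z: "lpath Z" "Z \<noteq> []" "hd Z = a" using lpath_app[OF P(1) Y(1)] P Y Pne by (auto simp: Z_def)
  have Zi: "pimage Z = pimage P \<union> pimage Y" "plen Z = plen P + plen Y" "set Z = set P \<union> set Y"
    using pimage_app[OF Pne Y(2)] plen_app[OF Pne Y(2)] set_app_tl[OF Pne Y(2)] P Y by (auto simp: Z_def)
  define R' where "R' = X @ tl Z"
  have "lpath R'" using lpath_app[OF X(1) Z(1)] X Z by (simp add: R'_def)
  moreover have "pimage R' = pimage X \<union> pimage Z" "plen R' = plen X + plen Z" "set R' = set X \<union> set Z"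
    using pimage_app[OF X(2) Z(2)] plen_app[OF X(2) Z(2)] set_app_tl[OF X(2) Z(2)] X Z by (auto simp: R'_def)
  moreover have "pimage R = pimage X \<union> pimage Y" "plen R = plen X + plen Y" "set R = set X \<union> set Y"
    using pimage_app[OF X(2) Y(2)] plen_app[OF X(2) Y(2)] set_app_tl[OF X(2) Y(2)] X Y RXY by auto
  ultimately show ?thesis using Zi by (intro exI[of _ R']) auto
qed

lemma ecnt_Cons: "ecnt (P # Ps) v = ec P v + ecnt Ps v"
  by (simp add: ecnt_def)

lemma ecnt_append: "ecnt (Ps @ Qs) v = ecnt Ps v + ecnt Qs v"
  by (simp add: ecnt_def)

lemma euler:
  assumes "\<forall>P\<in>set Ps. lpath P \<and> hd P \<in> set R \<and> last P \<in> set R" "lpath R" "\<forall>v. even (ecnt Ps v)"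
  shows "\<exists>Q. lpath Q \<and> set R \<subseteq> set Q \<and> plen Q = plen R + sum_list (map plen Ps) \<and>
             pimage Q = pimage R \<union> (\<Union>P\<in>set Ps. pimage P)"
  using assms
proof (induction "length Ps" arbitrary: Ps R rule: less_induct)
  case less
  show ?case
  proof (cases Ps)
    case Nil
    then show ?thesis using less.prems by auto
  next
    case (Cons P1 rest)
    have P1: "lpath P1" "hd P1 \<in> set R" "last P1 \<in> set R" using less.prems Cons by auto
    have P1ne: "P1 \<noteq> []" using P1 by (simp add: lpath_def)
    show ?thesis
    proof (cases "hd P1 = last P1")
      case True
      obtain i where i: "i < length R" "R ! i = hd P1" using P1 by (meson in_set_conv_nth)
      obtain R' where R': "lpath R'" "set R \<subseteq> set R'" "plen R' = plen R + plen P1" "pimage R' = pimage R \<union> pimage P1"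
        using splice[OF less.prems(2) i P1(1) refl True[symmetric]] by blast
      have ev: "\<forall>v. even (ecnt rest v)"
      proof
        fix v
        have "even (ecnt Ps v)" using less.prems(3) by blast
        moreover have "even (ec P1 v)" using True by (auto simp: ec_def)
        ultimately show "even (ecnt rest v)" using Cons by (simp add: ecnt_Cons)
      qed
      have "\<forall>P\<in>set rest. lpath P \<and> hd P \<in> set R' \<and> last P \<in> set R'" using less.prems Cons R' by auto
      from less.hyps[of rest R', OF _ this R'(1) ev] Cons obtain Q where
        Q: "lpath Q" "set R' \<subseteq> set Q" "plen Q = plen R' + sum_list (map plen rest)"
           "pimage Q = pimage R' \<union> (\<Union>P\<in>set rest. pimage P)" by auto
      show ?thesis using Q R' Cons by (intro exI[of _ Q]) auto
    next
      case False
      define b where "b = last P1"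
      have "even (ecnt Ps b)" using less.prems(3) by blast
      moreover have "ec P1 b = 1" using False by (simp add: ec_def b_def)
      ultimately have "odd (ecnt rest b)" using Cons by (simp add: ecnt_Cons)
      then have "\<exists>P2\<in>set rest. ec P2 b \<noteq> 0"
        unfolding ecnt_def by (metis (no_types, lifting) dvd_0_right imageE list.set_map sum_list_eq_0_iff)
      then obtain P2 where P2in: "P2 \<in> set rest" and P2b: "hd P2 = b \<or> last P2 = b"
        by (auto simp: ec_def split: if_splits)
      obtain xs ys where rest: "rest = xs @ P2 # ys" using P2in by (meson split_list)
      define P2' where "P2' = (if hd P2 = b then P2 else rev P2)"
      have P2: "lpath P2" "hd P2 \<in> set R" "last P2 \<in> set R" using less.prems Cons P2in by auto
      have P2ne: "P2 \<noteq> []" using P2 by (simp add: lpath_def)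
      have P2': "lpath P2'" "P2' \<noteq> []" "hd P2' = b" "pimage P2' = pimage P2" "plen P2' = plen P2"
         "last P2' \<in> set R" "ec P2' = ec P2"
        using P2 P2ne P2b by (auto simp: P2'_def lpath_rev pimage_rev plen_rev hd_rev last_rev ec_def fun_eq_iff)
      define M where "M = P1 @ tl P2'"
      have M: "lpath M" "pimage M = pimage P1 \<union> pimage P2" "plen M = plen P1 + plen P2"
        "hd M = hd P1"
        using lpath_app[OF P1(1) P2'(1)] pimage_app[OF P1ne P2'(2)] plen_app[OF P1ne P2'(2)] P1ne P2' b_def
        by (auto simp: M_def)
      have Mlast: "last M = last P2'"
      proof (cases "tl P2' = []")
        case True
        then have "P2' = [b]" using P2'(2,3) by (cases P2') auto
        then show ?thesis using True b_def by (simp add: M_def)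
      next
        case False
        then show ?thesis by (simp add: M_def last_tl P2'(2))
      qed
      define Ps' where "Ps' = M # xs @ ys"
      have len: "length Ps' < length Ps" using Cons rest by (simp add: Ps'_def)
      have ecM: "ec M v + (if v = b then 2 else 0) = ec P1 v + ec P2 v" for v
      proof -
        have "ec P2 v = ec P2' v" using P2'(7) by simp
        also have "\<dots> = (if b = v then 1 else 0) + (if last P2' = v then 1 else 0)"
          using P2'(3) by (simp add: ec_def)
        finally have e2: "ec P2 v = (if b = v then 1 else 0) + (if last P2' = v then 1 else 0)" .
        have e1: "ec P1 v = (if hd P1 = v then 1 else 0) + (if b = v then 1 else 0)"
          by (simp add: ec_def b_def)
        have e3: "ec M v = (if hd P1 = v then 1 else 0) + (if last P2' = v then 1 else 0)"
          using Mlast M(4) by (simp add: ec_def)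
        show ?thesis using e1 e2 e3 by auto
      qed
      have ev: "\<forall>v. even (ecnt Ps' v)"
      proof
        fix v
        have "even (ecnt Ps v)" using less.prems(3) by blast
        moreover have "ecnt Ps v = ec P1 v + ec P2 v + ecnt xs v + ecnt ys v"
          using Cons rest by (simp add: ecnt_Cons ecnt_append)
        moreover have "ecnt Ps' v = ec M v + ecnt xs v + ecnt ys v"
          by (simp add: Ps'_def ecnt_Cons ecnt_append)
        moreover note ecM[of v]
        ultimately show "even (ecnt Ps' v)"
        proof (cases "v = b")
          case True
          assume "even (ecnt Ps v)" "ecnt Ps v = ec P1 v + ec P2 v + ecnt xs v + ecnt ys v"
            "ecnt Ps' v = ec M v + ecnt xs v + ecnt ys v" "ec M v + (if v = b then 2 else 0) = ec P1 v + ec P2 v"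
          then have "ecnt Ps v = ecnt Ps' v + 2" using True by simp
          then show ?thesis using \<open>even (ecnt Ps v)\<close> by simp
        next
          case False
          assume "even (ecnt Ps v)" "ecnt Ps v = ec P1 v + ec P2 v + ecnt xs v + ecnt ys v"
            "ecnt Ps' v = ec M v + ecnt xs v + ecnt ys v" "ec M v + (if v = b then 2 else 0) = ec P1 v + ec P2 v"
          then have "ecnt Ps v = ecnt Ps' v" using False by simp
          then show ?thesis using \<open>even (ecnt Ps v)\<close> by simp
        qed
      qed
      have "\<forall>P\<in>set Ps'. lpath P \<and> hd P \<in> set R \<and> last P \<in> set R"
        using less.prems Cons rest M Mlast P1 P2' by (auto simp: Ps'_def)
      from less.hyps[OF len this less.prems(2) ev] obtain Q where
        Q: "lpath Q" "set R \<subseteq> set Q" "plen Q = plen R + sum_list (map plen Ps')"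
           "pimage Q = pimage R \<union> (\<Union>P\<in>set Ps'. pimage P)" by auto
      have "sum_list (map plen Ps') = sum_list (map plen Ps)"
        using Cons rest M by (simp add: Ps'_def)
      moreover have "(\<Union>P\<in>set Ps'. pimage P) = (\<Union>P\<in>set Ps. pimage P)"
        using Cons rest M by (auto simp: Ps'_def)
      ultimately show ?thesis using Q by (intro exI[of _ Q]) auto
    qed
  qed
qed


lemma ecnt_zero: "(\<forall>P\<in>set Ps. ec P v = 0) \<Longrightarrow> ecnt Ps v = 0"
  by (simp add: ecnt_def sum_list_eq_0_iff)

theorem lemma2p6:
  fixes c :: "pt list" and Ps :: "pt list list"
  assumes "lcycle c"
    and "\<forall>P\<in>set Ps. lpath P \<and> pimage P \<subseteq> region c \<and> hd P \<in> set c \<and> last P \<in> set c"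
    and "\<forall>P1\<in>set Ps. \<forall>P2\<in>set Ps. \<not> ess_cross c P1 P2"
  shows "\<exists>Q. lpath Q \<and>
    real (plen Q) \<le> 3 / 2 * real (plen c) + (\<Sum>P\<leftarrow>Ps. real (plen P)) \<and>
    (\<Union>P\<in>set Ps. pimage P) \<subseteq> pimage Q \<and>
    pimage Q \<subseteq> (\<Union>P\<in>set Ps. pimage P) \<union> pimage c"
proof -
  from assms(1) have cpath: "lpath c" and cL: "length c \<ge> 5" and chd: "hd c = last c"
    and cdist: "distinct (butlast c)" by (auto simp: lcycle_def)
  define L where "L = length c - 1"
  have L4: "L \<ge> 4" using cL by (simp add: L_def)
  have plc: "plen c = L" by (simp add: plen_def L_def)
  have cne: "c \<noteq> []" using cL by auto
  have cL0: "c ! L = c ! 0" using chd cne by (simp add: L_def last_conv_nth hd_conv_nth)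
  have inj: "c ! i = c ! j \<longleftrightarrow> i = j" if "i < L" "j < L" for i j
  proof -
    have "butlast c ! i = c ! i" "butlast c ! j = c ! j" using that by (auto simp: L_def nth_butlast)
    moreover have "length (butlast c) = L" by (simp add: L_def)
    ultimately show ?thesis using nth_eq_iff_index_eq[OF cdist] that by metis
  qed
  have setc: "\<exists>j<L. c ! j = v" if vin: "v \<in> set c" for v
  proof -
    obtain k where k: "k < length c" "c ! k = v" using vin by (meson in_set_conv_nth)
    show ?thesis
    proof (cases "k < L")
      case True then show ?thesis using k by blast
    next
      case False
      then have "k = L" using k by (simp add: L_def)
      then show ?thesis using k cL0 L4 by (intro exI[of _ 0]) auto
    qed
  qed
  have one: "(\<Sum>k<L. if a = c ! k then 1 else 0) = (1::nat)" if ain: "a \<in> set c" for a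
  proof -
    obtain j where j: "j < L" "c ! j = a" using setc[OF ain] by blast
    have "(\<Sum>k<L. if a = c ! k then 1 else 0) = (\<Sum>k<L. if k = j then 1 else (0::nat))"
      using inj j by (intro sum.cong) auto
    also have "\<dots> = 1" using j by simp
    finally show ?thesis .
  qed
  define cnt where "cnt k = ecnt Ps (c ! k)" for k
  define x where "x i = odd (\<Sum>k\<le>i. cnt k)" for i
  have tot: "(\<Sum>k<L. ecnt Qs (c ! k)) = 2 * length Qs" if "set Qs \<subseteq> set Ps" for Qs
    using that
  proof (induction Qs)
    case Nil then show ?case by (simp add: ecnt_def)
  next
    case (Cons P Qs)
    have P: "hd P \<in> set c" "last P \<in> set c" using Cons.prems assms(2) by auto
    have "(\<Sum>k<L. ecnt (P # Qs) (c ! k)) = (\<Sum>k<L. ec P (c ! k)) + (\<Sum>k<L. ecnt Qs (c ! k))"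
      by (simp add: ecnt_Cons sum.distrib)
    also have "(\<Sum>k<L. ec P (c ! k)) = 2"
      using one[OF P(1)] one[OF P(2)] by (simp add: ec_def sum.distrib)
    finally show ?case using Cons by simp
  qed
  have xL: "\<not> x (L - 1)"
  proof -
    have "{..L - 1} = {..<L}" using L4 by auto
    then show ?thesis using tot[of Ps] by (simp add: x_def cnt_def)
  qed
  have xstep: "x j = (x (j - 1) \<noteq> odd (cnt j))" if j0: "0 < j" for j
  proof -
    obtain m where "j = Suc m" using j0 by (cases j) auto
    then show ?thesis by (simp add: x_def)
  qed
  have x0: "x 0 = odd (cnt 0)" by (simp add: x_def)
  define t where "t = (2 * length (filter x [0..<L]) \<le> L)"
  define I where "I = filter (\<lambda>i. x i = t) [0..<L]"
  define E where "E = map (\<lambda>i. [c ! i, c ! Suc i]) I"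
  have setI: "set I = {i. i < L \<and> x i = t}" by (auto simp: I_def)
  have Ein: "lpath P \<and> hd P \<in> set c \<and> last P \<in> set c \<and> plen P = 1 \<and> pimage P \<subseteq> pimage c"
    if PE: "P \<in> set E" for P
  proof -
    obtain i where i: "i < L" "P = [c ! i, c ! Suc i]" using PE setI by (auto simp: E_def)
    have si: "Suc i < length c" using i by (simp add: L_def)
    have "adj (c ! i) (c ! Suc i)" using cpath si by (simp add: lpath_def)
    then have "lpath P" using i by (simp add: lpath_alt ed_def)
    moreover have "pimage P \<subseteq> pimage c"
      using si i by (auto simp: pimage_def less_Suc_eq)
    ultimately show ?thesis using i si by (auto simp: plen_def)
  qed
  have lenE: "2 * length E \<le> L"
  proof -
    have c: "length (filter x [0..<L]) + length (filter (\<lambda>i. \<not> x i) [0..<L]) = L"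
      using sum_length_filter_compl[of x "[0..<L]"] by simp
    show ?thesis
    proof (cases t)
      case True
      then show ?thesis by (simp add: E_def I_def t_def)
    next
      case False
      then have "length E = length (filter (\<lambda>i. \<not> x i) [0..<L])"
        by (simp add: E_def I_def)
      then show ?thesis using c False by (simp add: t_def)
    qed
  qed
  have ev: "\<forall>v. even (ecnt (Ps @ E) v)"
  proof
    fix v
    show "even (ecnt (Ps @ E) v)"
    proof (cases "v \<in> set c")
      case False
      have "ecnt Ps v = 0" using False assms(2) by (intro ecnt_zero) (auto simp: ec_def)
      moreover have "ecnt E v = 0" using False Ein by (intro ecnt_zero) (auto simp: ec_def)
      ultimately show ?thesis by (simp add: ecnt_append)
    next
      case True
      obtain j where j: "j < L" "c ! j = v" using setc[OF True] by blast
      define j' where "j' = (if j = 0 then L - 1 else j - 1)"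
      have j': "j' < L" using j L4 by (auto simp: j'_def)
      have sucq: "c ! Suc i = c ! j \<longleftrightarrow> i = j'" if "i < L" for i
      proof (cases "Suc i < L")
        case True
        then show ?thesis using inj[OF True j(1)] j by (auto simp: j'_def)
      next
        case False
        then have "Suc i = L" using that by simp
        then show ?thesis using inj[OF _ j(1), of 0] L4 cL0 j by (auto simp: j'_def)
      qed
      have "ecnt E v = (\<Sum>i\<in>set I. ec [c ! i, c ! Suc i] v)"
        by (simp add: ecnt_def E_def o_def sum_list_distinct_conv_sum_set I_def)
      also have "\<dots> = (\<Sum>i\<in>set I. (if i = j then 1 else 0) + (if i = j' then 1 else 0))"
        using setI j inj sucq by (intro sum.cong) (auto simp: ec_def)
      also have "\<dots> = (if j \<in> set I then 1 else 0) + (if j' \<in> set I then 1 else 0)"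
        by (simp add: sum.distrib)
      finally have eE: "ecnt E v = (if x j = t then 1 else 0) + (if x j' = t then 1 else 0)"
        using setI j j' by simp
      have xj: "x j = (x j' \<noteq> odd (cnt j))"
        using xstep x0 xL by (cases "j = 0") (auto simp: j'_def)
      have "ecnt Ps v = cnt j" using j by (simp add: cnt_def)
      then show ?thesis using eE xj by (cases t; cases "x j'") (auto simp: ecnt_append)
    qed
  qed
  have pieces: "\<forall>P\<in>set (Ps @ E). lpath P \<and> hd P \<in> set c \<and> last P \<in> set c"
    using assms(2) Ein by auto
  obtain Q where Q: "lpath Q" "plen Q = plen c + sum_list (map plen (Ps @ E))"
      "pimage Q = pimage c \<union> (\<Union>P\<in>set (Ps @ E). pimage P)"
    using euler[OF pieces cpath ev] by blast
  have "sum_list (map plen E) = length E"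
  proof -
    have gen: "\<forall>P\<in>set Es. plen P = 1 \<Longrightarrow> sum_list (map plen Es) = length Es" for Es
      by (induction Es) auto
    show ?thesis using Ein by (intro gen) auto
  qed
  then have "plen Q = L + sum_list (map plen Ps) + length E" using Q(2) plc by simp
  then have "real (plen Q) = real L + (\<Sum>P\<leftarrow>Ps. real (plen P)) + real (length E)"
    by (simp add: sum_list_of_nat[symmetric] o_def)
  moreover have "real (length E) \<le> real L / 2" using lenE by simp
  ultimately have len: "real (plen Q) \<le> 3 / 2 * real (plen c) + (\<Sum>P\<leftarrow>Ps. real (plen P))"
    using plc by simp
  have "(\<Union>P\<in>set E. pimage P) \<subseteq> pimage c" using Ein by auto
  then show ?thesis using Q(1,3) len by (intro exI[of _ Q]) auto
qed

end
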